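(* Let $w$ be an nTL-monomial for $P_n$ and let $x_i$ be a letter occurring in $w$. If $i$ is the $j$-th smallest among the distinct indices occurring in $w$, then $x_i$ occurs at most $j$ times in $w$; likewise, if $i$ is the $j$-th largest among the distinct indices occurring in $w$, then $x_i$ occurs at most $j$ times in $w$.
   Context: The nil-Temperley-Lieb algebra $A_n$ of the path graph $P_n$ is the unital associative algebra generated by $x_1,\dots,x_n$ subject to the relations $x_i^2=0$; $x_ix_j=x_jx_i$ if $|i-j|>1$; $x_ix_{i+1}x_i=0$ and $x_{i+1}x_ix_{i+1}=0$ for $1\le i<n$. Two words are equivalent if one can be obtained from the other by repeatedly swapping adjacent letters $x_ix_j\to x_jx_i$ with $|i-j|>1$. A word is reducible if it equals $0$ in $A_n$. An nTL-monomial is a word that is not reducible and lexicographically smallest (by index sequence) among all words equivalent to it. *)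

theory Defs
  imports Main
begin

type_synonym word = "nat list"

text \<open>Elements of the free associative algebra over a field 'k on letters x_1,...,x_n are
represented as formal sums: lists of (coefficient, word) pairs.  The coefficient of a word z
in such a formal sum:\<close>
definition fcoeff :: "('k::field \<times> word) list \<Rightarrow> word \<Rightarrow> 'k" where
  "fcoeff xs z = sum_list (map fst (filter (\<lambda>p. snd p = z) xs))"

text \<open>The defining relations of the nil-Temperley-Lieb algebra A_n of the path P_n,
each written as an element r of the free algebra (meaning r = 0).\<close>
definition nTL_rels :: "nat \<Rightarrow> ('k::field \<times> word) list set" where
  "nTL_rels n =
     {[(1, [i, i])] | i. 1 \<le> i \<and> i \<le> n}
   \<union> {[(1, [i, j]), (-1, [j, i])] | i j. 1 \<le> i \<and> i \<le> n \<and> 1 \<le> j \<and> j \<le> n \<and>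
                                         (i > j + 1 \<or> j > i + 1)}
   \<union> {[(1, [i, Suc i, i])] | i. 1 \<le> i \<and> i < n}
   \<union> {[(1, [Suc i, i, Suc i])] | i. 1 \<le> i \<and> i < n}"

definition sandwich :: "word \<Rightarrow> ('k::field \<times> word) list \<Rightarrow> word \<Rightarrow> ('k \<times> word) list" where
  "sandwich u r v = map (\<lambda>(c, y). (c, u @ y @ v)) r"

definition in_nTL_ideal :: "nat \<Rightarrow> (word \<Rightarrow> 'k::field) \<Rightarrow> bool" where
  "in_nTL_ideal n f \<longleftrightarrow>
     (\<exists>ts :: ('k \<times> word \<times> ('k \<times> word) list \<times> word) list.
        (\<forall>(c, u, r, v) \<in> set ts. r \<in> nTL_rels n) \<and>
        (\<forall>z. f z = sum_list (map (\<lambda>(c, u, r, v). c * fcoeff (sandwich u r v) z) ts)))"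

text \<open>A word is reducible if it equals 0 in A_n (over the field 'k).\<close>
definition nTL_reducible :: "'k::field itself \<Rightarrow> nat \<Rightarrow> word \<Rightarrow> bool" where
  "nTL_reducible _ n w \<longleftrightarrow> in_nTL_ideal n (\<lambda>z. if z = w then (1::'k) else 0)"

definition nTL_swap :: "word \<Rightarrow> word \<Rightarrow> bool" where
  "nTL_swap w w' \<longleftrightarrow> (\<exists>a b i j. (i > j + 1 \<or> j > i + 1) \<and> w = a @ [i, j] @ b \<and> w' = a @ [j, i] @ b)"

definition nTL_equiv :: "word \<Rightarrow> word \<Rightarrow> bool" where
  "nTL_equiv = nTL_swap\<^sup>*\<^sup>*"

definition nTL_monomial :: "'k::field itself \<Rightarrow> nat \<Rightarrow> word \<Rightarrow> bool" where
  "nTL_monomial K n w \<longleftrightarrow>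
     set w \<subseteq> {1..n} \<and> \<not> nTL_reducible K n w \<and>
     (\<forall>w'. nTL_equiv w w' \<longrightarrow> (w', w) \<notin> lexord {(a, b). a < b})"

end

theory Submission
  imports Defs
begin

lemma fcoeff_sandwich:
  "fcoeff (sandwich u r v) z = sum_list (map fst (filter (\<lambda>p. u @ snd p @ v = z) r))"
  by (induction r) (auto simp: fcoeff_def sandwich_def)

lemma I_rel:
  assumes "(r :: ('k::field \<times> word) list) \<in> nTL_rels n"
  shows "in_nTL_ideal n (\<lambda>z. fcoeff (sandwich u r v) z)"
  unfolding in_nTL_ideal_def
  apply (rule exI[of _ "[(1,u,r,v)]"])
  using assms by simp

lemma I_add:
  assumes "in_nTL_ideal n (f :: word \<Rightarrow> 'k::field)" "in_nTL_ideal n g"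
  shows "in_nTL_ideal n (\<lambda>z. f z + g z)"
proof -
  obtain ts1 :: "('k \<times> word \<times> ('k \<times> word) list \<times> word) list" where
    1: "(\<forall>(c, u, r, v) \<in> set ts1. r \<in> nTL_rels n)"
       "(\<forall>z. f z = sum_list (map (\<lambda>(c, u, r, v). c * fcoeff (sandwich u r v) z) ts1))"
    using assms(1) unfolding in_nTL_ideal_def by blast
  obtain ts2 :: "('k \<times> word \<times> ('k \<times> word) list \<times> word) list" where
    2: "(\<forall>(c, u, r, v) \<in> set ts2. r \<in> nTL_rels n)"
       "(\<forall>z. g z = sum_list (map (\<lambda>(c, u, r, v). c * fcoeff (sandwich u r v) z) ts2))"
    using assms(2) unfolding in_nTL_ideal_def by blast
  show ?thesis unfolding in_nTL_ideal_def
    apply (rule exI[of _ "ts1 @ ts2"])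
    using 1 2 by auto
qed

lemma R_base:
  assumes "[((1::'k::field), y)] \<in> nTL_rels n"
  shows "nTL_reducible TYPE('k) n (p @ y @ q)"
proof -
  have "(\<lambda>z. if z = p @ y @ q then (1::'k) else 0) = (\<lambda>z. fcoeff (sandwich p [((1::'k), y)] q) z)"
    by (auto simp: fcoeff_sandwich)
  then show ?thesis unfolding nTL_reducible_def using I_rel[OF assms] by metis
qed

lemma R_sq:
  assumes "1 \<le> a" "a \<le> n"
  shows "nTL_reducible TYPE('k::field) n (p @ [a,a] @ q)"
  apply (rule R_base)
  using assms by (auto simp: nTL_rels_def)

lemma R_up:
  assumes "1 \<le> a" "Suc a \<le> n"
  shows "nTL_reducible TYPE('k::field) n (p @ [a,Suc a,a] @ q)"
  apply (rule R_base)
  using assms by (auto simp: nTL_rels_def)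

lemma R_down:
  assumes "1 \<le> a" "Suc a \<le> n"
  shows "nTL_reducible TYPE('k::field) n (p @ [Suc a,a,Suc a] @ q)"
  apply (rule R_base)
  using assms by (auto simp: nTL_rels_def)

definition comm :: "nat \<Rightarrow> nat \<Rightarrow> bool" where
  "comm i j \<longleftrightarrow> i > j + 1 \<or> j > i + 1"

lemma comm_I: "x \<noteq> a \<Longrightarrow> x \<noteq> Suc a \<Longrightarrow> a \<noteq> Suc x \<Longrightarrow> comm a x"
  by (auto simp: comm_def)

lemma R_swap:
  assumes "1 \<le> i" "i \<le> n" "1 \<le> j" "j \<le> n" "comm i j"
    and "nTL_reducible TYPE('k::field) n (a @ [j,i] @ b)"
  shows "nTL_reducible TYPE('k) n (a @ [i,j] @ b)"
proof -
  have "[((1::'k), [i, j]), (-1, [j, i])] \<in>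
     {[((1::'k), [i, j]), (-1, [j, i])] | i j. 1 \<le> i \<and> i \<le> n \<and> 1 \<le> j \<and> j \<le> n \<and>
                                         (i > j + 1 \<or> j > i + 1)}"
    using assms(1-5) unfolding comm_def by blast
  then have rel: "[((1::'k), [i, j]), (-1, [j, i])] \<in> nTL_rels n"
    unfolding nTL_rels_def by blast
  have ne: "i \<noteq> j" using assms(5) by (auto simp: comm_def)
  have ne2: "a @ [i,j] @ b \<noteq> a @ [j,i] @ b" using ne by simp
  have eq: "(\<lambda>z. if z = a @ [i,j] @ b then (1::'k) else 0)
      = (\<lambda>z. (if z = a @ [j,i] @ b then (1::'k) else 0)
             + fcoeff (sandwich a [((1::'k), [i, j]), (-1, [j, i])] b) z)"
  proof (rule ext)
    fix z
    show "(if z = a @ [i,j] @ b then (1::'k) else 0)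
      = (if z = a @ [j,i] @ b then (1::'k) else 0)
             + fcoeff (sandwich a [((1::'k), [i, j]), (-1, [j, i])] b) z"
      using ne2 by (simp add: fcoeff_sandwich)
  qed
  have "in_nTL_ideal n (\<lambda>z. (if z = a @ [j,i] @ b then (1::'k) else 0)
             + fcoeff (sandwich a [((1::'k), [i, j]), (-1, [j, i])] b) z)"
    by (rule I_add[OF assms(6)[unfolded nTL_reducible_def] I_rel[OF rel]])
  then show ?thesis unfolding nTL_reducible_def eq .
qed

lemma R_move:
  assumes "set u \<subseteq> {1..n}" "1 \<le> a" "a \<le> n" "\<forall>x\<in>set u. comm a x"
    and "nTL_reducible TYPE('k::field) n (p @ u @ [a] @ q)"
  shows "nTL_reducible TYPE('k) n (p @ [a] @ u @ q)"
  using assms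
proof (induction u arbitrary: p)
  case Nil
  then show ?case by simp
next
  case (Cons x u)
  have "nTL_reducible TYPE('k) n ((p @ [x]) @ [a] @ u @ q)"
    using Cons.IH[of "p @ [x]"] Cons.prems by auto
  then have "nTL_reducible TYPE('k) n (p @ [x,a] @ (u @ q))" by simp
  then have "nTL_reducible TYPE('k) n (p @ [a,x] @ (u @ q))"
    using R_swap[of a n x] Cons.prems by auto
  then show ?case by simp
qed

lemma R_move2:
  assumes "set u \<subseteq> {1..n}" "1 \<le> a" "a \<le> n" "\<forall>x\<in>set u. comm a x"
    and "nTL_reducible TYPE('k::field) n (p @ [a] @ u @ q)"
  shows "nTL_reducible TYPE('k) n (p @ u @ [a] @ q)"
  using assms
proof (induction u arbitrary: p)
  case Nil
  then show ?case by simp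
next
  case (Cons x u)
  have s: "comm x a" using Cons.prems(4) by (auto simp: comm_def)
  have "nTL_reducible TYPE('k) n (p @ [a,x] @ (u @ q))" using Cons.prems by simp
  then have "nTL_reducible TYPE('k) n (p @ [x,a] @ (u @ q))"
    using R_swap[of x n a] Cons.prems s by auto
  then have "nTL_reducible TYPE('k) n ((p @ [x]) @ [a] @ u @ q)" by simp
  then show ?case using Cons.IH[of "p @ [x]"] Cons.prems by auto
qed

lemma key:
  assumes "set (p @ [a] @ u @ [a] @ q) \<subseteq> {1..n}"
    and "c = Suc a \<or> a = Suc c"
    and "\<forall>x\<in>set u. x \<noteq> a \<and> ((x = Suc a \<or> a = Suc x) \<longrightarrow> x = c)"
  shows "nTL_reducible TYPE('k::field) n (p @ [a] @ u @ [a] @ q)"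
  using assms
proof (induction "length u" arbitrary: p q a c u rule: less_induct)
  case less
  have a1: "1 \<le> a" "a \<le> n" using less.prems(1) by auto
  have su: "set u \<subseteq> {1..n}" using less.prems(1) by auto
  show ?case
  proof (cases "c \<in> set u")
    case False
    have cm: "\<forall>x\<in>set u. comm a x"
      using False less.prems(3) by (fastforce intro!: comm_I)
    have "nTL_reducible TYPE('k) n (p @ u @ [a,a] @ q)" using R_sq[of a n "p @ u" q] a1 by simp
    then have "nTL_reducible TYPE('k) n (p @ u @ [a] @ ([a] @ q))" by simp
    from R_move[OF su a1 cm this] show ?thesis by simp
  next
    case True
    then obtain u1 u2 where u: "u = u1 @ c # u2" "c \<notin> set u1"
      by (metis split_list_first)
    have c1: "1 \<le> c" "c \<le> n" using su u by auto
    show ?thesis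
    proof (cases "c \<in> set u2")
      case False
      have cm1: "\<forall>x\<in>set u1. comm a x"
        using u less.prems(3) by (fastforce intro!: comm_I)
      have cm2: "\<forall>x\<in>set u2. comm a x"
        using u False less.prems(3) by (fastforce intro!: comm_I)
      have s1: "set u1 \<subseteq> {1..n}" "set u2 \<subseteq> {1..n}" using su u by auto
      have "nTL_reducible TYPE('k) n ((p @ u1) @ [a,c,a] @ (u2 @ q))"
        using less.prems(2) R_up[of a n "p @ u1" "u2 @ q"] R_down[of c n "p @ u1" "u2 @ q"] a1 c1 by auto
      then have "nTL_reducible TYPE('k) n ((p @ u1 @ [a,c]) @ [a] @ u2 @ q)" by simp
      from R_move2[OF s1(2) a1 cm2 this]
      have "nTL_reducible TYPE('k) n (p @ u1 @ [a] @ ([c] @ u2 @ [a] @ q))" by simp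
      from R_move[OF s1(1) a1 cm1 this] show ?thesis using u by simp
    next
      case True
      then obtain v w2 where v: "u2 = v @ c # w2" "c \<notin> set v"
        by (metis split_list_first)
      define c' where "c' = (if c = Suc a then Suc c else c - 1)"
      have lt: "length v < length u" using u v by simp
      have "nTL_reducible TYPE('k) n ((p @ [a] @ u1) @ [c] @ v @ [c] @ (w2 @ [a] @ q))"
      proof (rule less.hyps[OF lt])
        show "set ((p @ [a] @ u1) @ [c] @ v @ [c] @ w2 @ [a] @ q) \<subseteq> {1..n}"
          using less.prems(1) u v by auto
        show "c' = Suc c \<or> c = Suc c'" using c'_def c1 by auto
        show "\<forall>x\<in>set v. x \<noteq> c \<and> ((x = Suc c \<or> c = Suc x) \<longrightarrow> x = c')"
        proof
          fix x assume x: "x \<in> set v"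
          then have "x \<noteq> a" using less.prems(3) u v by auto
          then show "x \<noteq> c \<and> ((x = Suc c \<or> c = Suc x) \<longrightarrow> x = c')"
            using x v(2) less.prems(2) c'_def by auto
        qed
      qed
      then show ?thesis using u v by simp
    qed
  qed
qed

lemma count_comb:
  assumes "set l \<subseteq> {a, b}" "a \<noteq> b" "\<forall>L1 L2. l \<noteq> L1 @ [a,a] @ L2"
  shows "count_list l a \<le> count_list l b + 1 \<and> (l \<noteq> [] \<longrightarrow> hd l = b \<longrightarrow> count_list l a \<le> count_list l b)"
  using assms
proof (induction l)
  case Nil
  then show ?case by simp
next
  case (Cons x l)
  have nl: "\<forall>L1 L2. l \<noteq> L1 @ [a,a] @ L2"
  proof (intro allI notI)
    fix L1 L2 assume "l = L1 @ [a,a] @ L2"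
    then have "x # l = (x # L1) @ [a,a] @ L2" by simp
    then show False using Cons.prems(3) by blast
  qed
  have IH: "count_list l a \<le> count_list l b + 1 \<and> (l \<noteq> [] \<longrightarrow> hd l = b \<longrightarrow> count_list l a \<le> count_list l b)"
    using Cons.IH Cons.prems nl by auto
  show ?case
  proof (cases "x = a")
    case True
    show ?thesis
    proof (cases l)
      case Nil then show ?thesis using True Cons.prems by simp
    next
      case (Cons y l')
      have "x # l \<noteq> [] @ [a,a] @ l'" using Cons.prems(3) by blast
      then have "y \<noteq> a" using True \<open>l = y # l'\<close> by simp
      then have "y = b" using \<open>l = y # l'\<close> \<open>set (x # l) \<subseteq> {a, b}\<close> by auto
      then show ?thesis using IH True Cons.prems(2) \<open>l = y # l'\<close> by auto
    qed
  next
    case False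
    then have "x = b" using Cons.prems by auto
    then show ?thesis using IH Cons.prems(2) by auto
  qed
qed

lemma count_filter_eq:
  "P a \<Longrightarrow> count_list (filter P w) a = count_list w a"
  by (induction w) auto

lemma filter_split_suffix:
  "filter P w = L1 @ L2 \<Longrightarrow> \<exists>us vs. w = us @ vs \<and> filter P vs = L2"
proof (induction w arbitrary: L1)
  case Nil
  then show ?case by auto
next
  case (Cons x w)
  show ?case
  proof (cases "P x")
    case True
    show ?thesis
    proof (cases L1)
      case Nil
      then show ?thesis using Cons.prems by (metis append_Nil)
    next
      case (Cons y L1')
      then have "filter P w = L1' @ L2" using Cons.prems True by simp
      then obtain us vs where "w = us @ vs" "filter P vs = L2" using Cons.IH by blast
      then show ?thesis by (metis append_Cons)
    qed
  next
    case False
    then have "filter P w = L1 @ L2" using Cons.prems by simp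
    then obtain us vs where "w = us @ vs" "filter P vs = L2" using Cons.IH by blast
    then show ?thesis by (metis append_Cons)
  qed
qed

lemma noaa:
  assumes "set w \<subseteq> {1..n}" "\<not> nTL_reducible TYPE('k::field) n w"
    and "b = Suc a \<or> a = Suc b"
  shows "count_list w a \<le> count_list w b + 1"
proof -
  define P where "P = (\<lambda>x. x = a \<or> x = b)"
  define l where "l = filter P w"
  have ab: "a \<noteq> b" using assms(3) by auto
  have nl: "\<forall>L1 L2. l \<noteq> L1 @ [a,a] @ L2"
  proof (intro allI notI)
    fix L1 L2 assume "l = L1 @ [a,a] @ L2"
    then obtain us vs where 1: "w = us @ vs" "filter P vs = a # a # L2"
      using filter_split_suffix[of P w L1 "a # a # L2"] unfolding l_def by auto
    then obtain us2 vs2 where 2: "vs = us2 @ a # vs2" "a # L2 = filter P vs2"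
      by (auto dest!: filter_eq_ConsD)
    then obtain us3 vs3 where 3: "vs2 = us3 @ a # vs3" "\<forall>u\<in>set us3. \<not> P u"
      by (auto dest!: filter_eq_ConsD[OF sym])
    have w: "w = (us @ us2) @ [a] @ us3 @ [a] @ vs3" using 1 2 3 by simp
    have a0: "1 \<le> a" using assms(1) w by auto
    define c where "c = (if a = Suc b then Suc a else a - 1)"
    have "nTL_reducible TYPE('k) n ((us @ us2) @ [a] @ us3 @ [a] @ vs3)"
    proof (rule key)
      show "set ((us @ us2) @ [a] @ us3 @ [a] @ vs3) \<subseteq> {1..n}" using assms(1) w by simp
      show "c = Suc a \<or> a = Suc c" using c_def a0 by auto
      show "\<forall>x\<in>set us3. x \<noteq> a \<and> ((x = Suc a \<or> a = Suc x) \<longrightarrow> x = c)"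
        using 3(2) assms(3) c_def unfolding P_def by auto
    qed
    then show False using assms(2) w by simp
  qed
  have "set l \<subseteq> {a, b}" unfolding l_def P_def by auto
  from count_comb[OF this ab nl] have "count_list l a \<le> count_list l b + 1" by simp
  moreover have "count_list l a = count_list w a" "count_list l b = count_list w b"
    unfolding l_def P_def by (auto intro: count_filter_eq)
  ultimately show ?thesis by simp
qed

lemma count0: "i \<notin> set w \<Longrightarrow> count_list w i = 0"
  by (induction w) auto

lemma up:
  assumes "set w \<subseteq> {1..n}" "\<not> nTL_reducible TYPE('k::field) n w"
  shows "count_list w i \<le> card {k \<in> set w. k \<le> i}"
proof (induction i)
  case 0
  have "0 \<notin> set w" using assms(1) by auto
  then show ?case by (simp add: count0)
next
  case (Suc m)
  show ?case
  proof (cases "Suc m \<in> set w")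
    case False then show ?thesis by (simp add: count0)
  next
    case True
    have "{k \<in> set w. k \<le> Suc m} = insert (Suc m) {k \<in> set w. k \<le> m}"
      using True by auto
    then have "card {k \<in> set w. k \<le> Suc m} = Suc (card {k \<in> set w. k \<le> m})"
      by simp
    moreover have "count_list w (Suc m) \<le> count_list w m + 1"
      using noaa[OF assms] by simp
    ultimately show ?thesis using Suc by simp
  qed
qed

lemma down:
  assumes "set w \<subseteq> {1..n}" "\<not> nTL_reducible TYPE('k::field) n w"
  shows "count_list w i \<le> card {k \<in> set w. i \<le> k}"
proof (induction "Suc n - i" arbitrary: i rule: less_induct)
  case less
  show ?case
  proof (cases "i \<in> set w")
    case False then show ?thesis by (simp add: count0)
  next
    case True
    then have "i \<le> n" using assms(1) by auto
    then have "Suc n - Suc i < Suc n - i" by simp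
    then have IH: "count_list w (Suc i) \<le> card {k \<in> set w. Suc i \<le> k}"
      using less by blast
    have "{k \<in> set w. i \<le> k} = insert i {k \<in> set w. Suc i \<le> k}"
      using True by auto
    then have "card {k \<in> set w. i \<le> k} = Suc (card {k \<in> set w. Suc i \<le> k})"
      by simp
    moreover have "count_list w i \<le> count_list w (Suc i) + 1"
      using noaa[OF assms] by simp
    ultimately show ?thesis using IH by simp
  qed
qed

theorem lemma7p1:
  fixes w :: "nat list" and n i :: nat
  assumes "nTL_monomial TYPE('k::field) n w"
    and "i \<in> set w"
  shows "count_list w i \<le> card {k \<in> set w. k \<le> i}
       \<and> count_list w i \<le> card {k \<in> set w. i \<le> k}"
  using up[of w n] down[of w n] assms(1) unfolding nTL_monomial_def by blast

end
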